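(* Every connected $3$-regular graph of order at least $8$ has an independent minimum vertex cut.
   Context: All graphs are finite and simple. A vertex cut of a connected graph $G$ is a set $S\subset V(G)$ such that $G-S$ is disconnected. If $G$ has connectivity $k$, a vertex cut $S$ is called minimum if $|S|=k$. A vertex cut $S$ is called an independent vertex cut if $S$ is an independent set of $G$. *)

theory Defs
  imports Main
begin

definition simple_graph :: "'a set \<Rightarrow> ('a \<Rightarrow> 'a \<Rightarrow> bool) \<Rightarrow> bool" where
  "simple_graph V E \<longleftrightarrow> finite V \<and> (\<forall>x y. E x y \<longrightarrow> x \<in> V \<and> y \<in> V)
     \<and> (\<forall>x y. E x y \<longrightarrow> E y x) \<and> (\<forall>x. \<not> E x x)"

definition reach_in :: "('a \<Rightarrow> 'a \<Rightarrow> bool) \<Rightarrow> 'a set \<Rightarrow> 'a \<Rightarrow> 'a \<Rightarrow> bool" where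
  "reach_in E U = (\<lambda>x y. E x y \<and> x \<in> U \<and> y \<in> U)\<^sup>*\<^sup>*"

definition connected_on :: "('a \<Rightarrow> 'a \<Rightarrow> bool) \<Rightarrow> 'a set \<Rightarrow> bool" where
  "connected_on E U \<longleftrightarrow> U \<noteq> {} \<and> (\<forall>x\<in>U. \<forall>y\<in>U. reach_in E U x y)"

definition disconnected_on :: "('a \<Rightarrow> 'a \<Rightarrow> bool) \<Rightarrow> 'a set \<Rightarrow> bool" where
  "disconnected_on E U \<longleftrightarrow> (\<exists>x\<in>U. \<exists>y\<in>U. \<not> reach_in E U x y)"

definition vertex_cut :: "'a set \<Rightarrow> ('a \<Rightarrow> 'a \<Rightarrow> bool) \<Rightarrow> 'a set \<Rightarrow> bool" where
  "vertex_cut V E S \<longleftrightarrow> S \<subseteq> V \<and> disconnected_on E (V - S)"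

definition connectivity :: "'a set \<Rightarrow> ('a \<Rightarrow> 'a \<Rightarrow> bool) \<Rightarrow> nat" where
  "connectivity V E = Min {card S | S. S \<subseteq> V \<and> (disconnected_on E (V - S) \<or> card (V - S) \<le> 1)}"

definition min_vertex_cut :: "'a set \<Rightarrow> ('a \<Rightarrow> 'a \<Rightarrow> bool) \<Rightarrow> 'a set \<Rightarrow> bool" where
  "min_vertex_cut V E S \<longleftrightarrow> vertex_cut V E S \<and> card S = connectivity V E"

definition independent_set :: "('a \<Rightarrow> 'a \<Rightarrow> bool) \<Rightarrow> 'a set \<Rightarrow> bool" where
  "independent_set E S \<longleftrightarrow> (\<forall>x\<in>S. \<forall>y\<in>S. \<not> E x y)"

definition regular :: "'a set \<Rightarrow> ('a \<Rightarrow> 'a \<Rightarrow> bool) \<Rightarrow> nat \<Rightarrow> bool" where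
  "regular V E k \<longleftrightarrow> (\<forall>v\<in>V. card {u. E v u} = k)"

end

theory Submission
  imports Defs
begin

lemma reach_in_U: "reach_in E U x z \<Longrightarrow> x \<in> U \<Longrightarrow> z \<in> U"
  unfolding reach_in_def by (induction rule: rtranclp_induct) auto

definition closed_in :: "('a \<Rightarrow> 'a \<Rightarrow> bool) \<Rightarrow> 'a set \<Rightarrow> 'a set \<Rightarrow> bool" where
  "closed_in E X U \<longleftrightarrow> (\<forall>u\<in>X. \<forall>w\<in>U. E u w \<longrightarrow> w \<in> X)"

lemma sep:
  assumes "closed_in E X U" "x \<in> X" "y \<in> U" "y \<notin> X" "X \<subseteq> U"
  shows "disconnected_on E U"
proof -
  have "reach_in E U x z \<Longrightarrow> z \<in> X" for z
    unfolding reach_in_def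
  proof (induction rule: rtranclp_induct)
    case base then show ?case using assms by simp
  next
    case (step z w) then show ?case using assms(1) unfolding closed_in_def by blast
  qed
  then show ?thesis unfolding disconnected_on_def using assms by blast
qed

lemma fin_K: "finite V \<Longrightarrow> finite {card S | S. S \<subseteq> V \<and> (disconnected_on E (V - S) \<or> card (V - S) \<le> 1)}"
  by (rule finite_subset[of _ "{..card V}"]) (auto intro: card_mono)

lemma conn_le:
  assumes "finite V" "S \<subseteq> V" "disconnected_on E (V - S)"
  shows "connectivity V E \<le> card S"
  unfolding connectivity_def
  by (rule Min_le[OF fin_K[OF assms(1)]]) (use assms in blast)

lemma conn_ex:
  assumes "finite V"
  shows "\<exists>S. S \<subseteq> V \<and> (disconnected_on E (V - S) \<or> card (V - S) \<le> 1) \<and> card S = connectivity V E"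
proof -
  have "connectivity V E \<in> {card S | S. S \<subseteq> V \<and> (disconnected_on E (V - S) \<or> card (V - S) \<le> 1)}"
    unfolding connectivity_def
    by (rule Min_in[OF fin_K[OF assms(1)]]) auto
  then show ?thesis by auto
qed

lemma cut_card:
  assumes "finite V" "S \<subseteq> V" "X \<subseteq> V - S" "x \<in> X" "closed_in E X (V - S)" "card (S \<union> X) < card V"
  shows "disconnected_on E (V - S)"
proof -
  have "card (S \<union> X) < card V" by fact
  then have "\<not> V \<subseteq> S \<union> X" using assms(2,3) by (metis Diff_subset Un_absorb2 Un_subset_iff less_irrefl subset_antisym)
  then obtain y where "y \<in> V" "y \<notin> S \<union> X" by blast
  then show ?thesis using sep[OF assms(5) assms(4), of y] assms by blast
qed

lemma cut6:
  assumes "finite V" "S \<subseteq> V" "X \<subseteq> V - S" "x \<in> X" "closed_in E X (V - S)" "S \<union> X \<subseteq> W" "finite W" "card W < card V"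
  shows "disconnected_on E (V - S)"
proof -
  have "card (S \<union> X) \<le> card W" using assms(6,7) card_mono by blast
  then have "card (S \<union> X) < card V" using assms(8) by (rule le_less_trans)
  then show ?thesis by (rule cut_card[OF assms(1-5)])
qed

lemma three_elems:
  assumes "card A = 3" "a \<in> A" "b \<in> A" "a \<noteq> b"
  shows "\<exists>c. A = {a, b, c} \<and> c \<noteq> a \<and> c \<noteq> b"
proof -
  have fin: "finite A" using assms(1) card.infinite by fastforce
  have "card (A - {a,b}) = 1" using assms fin by (simp add: card_Diff_subset)
  then obtain c where c: "A - {a,b} = {c}" using card_1_singletonE by blast
  then have "A = {a,b,c}" using assms by blast
  then show ?thesis using c by blast
qed

lemma three_eq:
  assumes "card A = 3" "a \<in> A" "b \<in> A" "c \<in> A" "a \<noteq> b" "a \<noteq> c" "b \<noteq> c"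
  shows "A = {a, b, c}"
proof -
  have fin: "finite A" using assms(1) card.infinite by fastforce
  have "card {a,b,c} = 3" using assms by simp
  then show ?thesis using card_subset_eq[OF fin, of "{a,b,c}"] assms by auto
qed

lemma other_elem:
  assumes "card A = 3"
  shows "\<exists>z\<in>A. z \<notin> {x, y}"
proof (rule ccontr)
  assume "\<not> ?thesis"
  then have "A \<subseteq> {x,y}" by blast
  then have "card A \<le> card {x,y}" by (simp add: card_mono)
  also have "\<dots> \<le> 2" by (simp add: card_insert_le_m1)
  finally show False using assms by simp
qed

lemma card_list6: "card {a,b,c,d,e,f::'a} \<le> 6"
proof -
  have "card (set [a,b,c,d,e,f]) \<le> 6" using card_length[of "[a,b,c,d,e,f]"] by simp
  then show ?thesis by simp
qed

lemma nbr_exists: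
  assumes fin: "finite V" and inV: "\<And>x y. E x y \<Longrightarrow> x \<in> V \<and> y \<in> V"
    and sym: "\<And>x y. E x y \<Longrightarrow> E y x"
    and cl: "closed_in E X (V - {x, y})" and sub: "X \<subseteq> V - {x, y}" and p: "p \<in> X"
    and q: "q \<in> V - {x, y}" "q \<notin> X" and k: "2 \<le> connectivity V E" and "y \<in> V"
  shows "\<exists>u\<in>X. E x u"
proof (rule ccontr)
  assume "\<not> ?thesis"
  then have "closed_in E X (V - {y})" unfolding closed_in_def
  proof (intro ballI impI)
    fix u w assume nx: "\<not> (\<exists>u\<in>X. E x u)" and u: "u \<in> X" and w: "w \<in> V - {y}" and uw: "E u w"
    have "w \<noteq> x" using nx u sym[OF uw] by blast
    then show "w \<in> X" using cl u w uw unfolding closed_in_def by blast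
  qed
  then have "disconnected_on E (V - {y})"
    using sep[of E X "V - {y}" p q] p q sub by blast
  then have "connectivity V E \<le> card {y}" using conn_le[OF fin, of "{y}"] \<open>y \<in> V\<close> by simp
  then show False using k by simp
qed

theorem lemma6:
  fixes V :: "'a set" and E :: "'a \<Rightarrow> 'a \<Rightarrow> bool"
  assumes "simple_graph V E"
    and "connected_on E V"
    and "regular V E 3"
    and "card V \<ge> 8"
  shows "\<exists>S. min_vertex_cut V E S \<and> independent_set E S"
proof -
  have fin: "finite V" and inV: "\<And>x y. E x y \<Longrightarrow> x \<in> V \<and> y \<in> V"
    and sym: "\<And>x y. E x y \<Longrightarrow> E y x" and irr: "\<And>x. \<not> E x x"
    using assms(1) unfolding simple_graph_def by auto
  have deg: "\<And>v. v \<in> V \<Longrightarrow> card {u. E v u} = 3" using assms(3) unfolding regular_def by auto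
  have notdisc: "\<not> disconnected_on E V"
    using assms(2) unfolding connected_on_def disconnected_on_def by blast
  define k where "k = connectivity V E"
  obtain v0 where v0: "v0 \<in> V" using assms(2) unfolding connected_on_def by auto
  have cutN: "disconnected_on E (V - {u. E v u})" if "v \<in> V" for v
  proof (rule cut_card[OF fin, of _ "{v}" v])
    show "{u. E v u} \<subseteq> V" using inV by auto
    show "{v} \<subseteq> V - {u. E v u}" using that irr by auto
    show "closed_in E {v} (V - {u. E v u})" unfolding closed_in_def by auto
    have "card ({u. E v u} \<union> {v}) \<le> card {u. E v u} + card {v}" by (rule card_Un_le)
    then show "card ({u. E v u} \<union> {v}) < card V" using deg[OF that] assms(4) by simp
  qed simp
  have k3: "k \<le> 3"
    using conn_le[OF fin _ cutN[OF v0]] deg[OF v0] inV k_def by auto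
  obtain S0 where S0: "S0 \<subseteq> V" "disconnected_on E (V - S0) \<or> card (V - S0) \<le> 1" "card S0 = k"
    using conn_ex[OF fin] k_def by blast
  have S0d: "disconnected_on E (V - S0)"
  proof (rule ccontr)
    assume "\<not> ?thesis"
    then have "card (V - S0) \<le> 1" using S0 by blast
    moreover have "card (V - S0) = card V - card S0" using S0(1) fin by (simp add: card_Diff_subset finite_subset)
    ultimately show False using k3 S0(3) assms(4) by simp
  qed
  have k0: "k \<noteq> 0"
  proof
    assume "k = 0"
    then have "S0 = {}" using S0 fin finite_subset by fastforce
    then show False using S0d notdisc by simp
  qed
  have lower: "\<And>S. S \<subseteq> V \<Longrightarrow> disconnected_on E (V - S) \<Longrightarrow> k \<le> card S"
    using conn_le[OF fin] k_def by blast
  have fin3: "\<And>v. v \<in> V \<Longrightarrow> finite {u. E v u}" using deg by (metis card.infinite zero_neq_numeral)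
  consider "k = 1" | "k = 2" | "k = 3" using k0 k3 by linarith
  then show ?thesis
  proof cases
    case 1
    then obtain s where "S0 = {s}" using S0(3) card_1_singletonE by blast
    moreover have "independent_set E {s}" using irr unfolding independent_set_def by auto
    moreover have "min_vertex_cut V E {s}" using S0 S0d 1 k_def \<open>S0 = {s}\<close>
      unfolding min_vertex_cut_def vertex_cut_def by simp
    ultimately show ?thesis by blast
  next
    case 2
    have "card S0 = 2" using S0(3) 2 by simp
    then obtain x y where xy: "S0 = {x,y}" "x \<noteq> y" unfolding card_2_iff by blast
    have xV: "x \<in> V" and yV: "y \<in> V" using xy(1) S0(1) by auto
    show ?thesis
    proof (cases "E x y")
      case False
      have "independent_set E {x,y}" unfolding independent_set_def
        using False irr sym[of y x] by blast
      moreover have "min_vertex_cut V E S0" using S0(1) S0d S0(3) k_def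
        unfolding min_vertex_cut_def vertex_cut_def by blast
      ultimately show ?thesis using xy(1) by blast
    next
      case Exy: True
      define U where "U = V - {x,y}"
      obtain p q where pq: "p \<in> U" "q \<in> U" "\<not> reach_in E U p q"
        using S0d xy unfolding U_def disconnected_on_def by auto
      define C where "C = {z. reach_in E U p z}"
      have CU: "C \<subseteq> U"
      proof
        fix z assume "z \<in> C"
        then have "reach_in E U p z" using C_def by simp
        then show "z \<in> U" using reach_in_U pq(1) by metis
      qed
      have pC: "p \<in> C" unfolding C_def reach_in_def by (simp only: mem_Collect_eq rtranclp.rtrancl_refl)
      have qC: "q \<notin> C" using pq(3) unfolding C_def by (simp only: mem_Collect_eq not_False_eq_True)
      have clC: "closed_in E C U" unfolding closed_in_def
      proof (intro ballI impI)
        fix u w assume u: "u \<in> C" and w: "w \<in> U" and uw: "E u w"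
        have "u \<in> U" using u CU by blast
        have "reach_in E U p u" using u C_def by simp
        then have "reach_in E U p w" unfolding reach_in_def
          using uw w \<open>u \<in> U\<close> by (simp add: rtranclp.rtrancl_into_rtrancl)
        then show "w \<in> C" using C_def by simp
      qed
      define D where "D = U - C"
      have clD: "closed_in E D U" unfolding closed_in_def
      proof (intro ballI impI)
        fix u w assume u: "u \<in> D" and w: "w \<in> U" and uw: "E u w"
        show "w \<in> D"
        proof (rule ccontr)
          assume "w \<notin> D"
          then have "w \<in> C" using w D_def by simp
          then have "u \<in> C" using clC sym[OF uw] u D_def unfolding closed_in_def by blast
          then show False using u D_def by simp
        qed
      qed
      have qD: "q \<in> D" using pq qC D_def by simp
      have DU: "D \<subseteq> U" using D_def by auto
      have k2: "2 \<le> connectivity V E" using 2 k_def by simp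
      have U': "U = V - {y, x}" using U_def by auto
      have qU: "q \<in> V - {x,y}" and pU: "p \<in> V - {x,y}" and pD: "p \<notin> D" using pq pC U_def D_def by auto
      have qU': "q \<in> V - {y,x}" and pU': "p \<in> V - {y,x}" using qU pU by auto
      have CU': "C \<subseteq> V - {y,x}" and DU': "D \<subseteq> V - {y,x}" using CU DU U' by auto
      have clC': "closed_in E C (V - {y,x})" and clD': "closed_in E D (V - {y,x})" using clC clD U' by auto
      have CU2: "C \<subseteq> V - {x,y}" and DU2: "D \<subseteq> V - {x,y}" using CU DU U_def by auto
      have clC2: "closed_in E C (V - {x,y})" and clD2: "closed_in E D (V - {x,y})" using clC clD U_def by auto
      obtain xc where xc: "xc \<in> C" "E x xc"
        using nbr_exists[OF fin inV sym clC2 CU2 pC qU qC k2 yV] by blast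
      obtain xd where xd: "xd \<in> D" "E x xd"
        using nbr_exists[OF fin inV sym clD2 DU2 qD pU pD k2 yV] by blast
      obtain yc where yc: "yc \<in> C" "E y yc"
        using nbr_exists[OF fin inV sym clC' CU' pC qU' qC k2 xV] by blast
      obtain yd where yd: "yd \<in> D" "E y yd"
        using nbr_exists[OF fin inV sym clD' DU' qD pU' pD k2 xV] by blast
      have xcU: "xc \<in> U" "xc \<notin> D" and xdU: "xd \<in> U" "xd \<notin> C"
        and ycU: "yc \<in> U" "yc \<notin> D" and ydU: "yd \<in> U" "yd \<notin> C"
        using xc xd yc yd CU DU D_def by auto
      have Nx: "{u. E x u} = {y, xc, xd}"
        by (rule three_eq[OF deg[OF xV]]) (use Exy xc xd xcU xdU U_def in auto)
      have Ny: "{u. E y u} = {x, yc, yd}"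
        by (rule three_eq[OF deg[OF yV]]) (use Exy sym[OF Exy] yc yd ycU ydU U_def in auto)
      have Ex: "\<And>u. E x u \<longleftrightarrow> u = y \<or> u = xc \<or> u = xd"
      proof -
        fix u have "E x u \<longleftrightarrow> u \<in> {u. E x u}" by simp
        then show "E x u \<longleftrightarrow> u = y \<or> u = xc \<or> u = xd" unfolding Nx by simp
      qed
      have Ey: "\<And>u. E y u \<longleftrightarrow> u = x \<or> u = yc \<or> u = yd"
      proof -
        fix u have "E y u \<longleftrightarrow> u \<in> {u. E y u}" by simp
        then show "E y u \<longleftrightarrow> u = x \<or> u = yc \<or> u = yd" unfolding Ny by simp
      qed
      obtain z where z: "E xc z" "z \<notin> {x,y}"
        using other_elem[OF deg, of xc x y] xc CU U_def by auto
      have zC: "z \<in> C" using z inV clC xc CU unfolding closed_in_def U_def by blast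
      have zxc: "z \<noteq> xc" using z irr by auto
      have xcV: "xc \<in> V" using xc CU U_def by auto
      show ?thesis
      proof (cases "xc = yc")
        case True
        have "closed_in E (C - {xc}) (V - {xc})"
          unfolding closed_in_def
        proof (intro ballI impI)
          fix u w assume u: "u \<in> C - {xc}" and w: "w \<in> V - {xc}" and uw: "E u w"
          have uU: "u \<in> U" "u \<noteq> xc" "u \<in> C" using u CU by auto
          have "w \<noteq> x"
          proof
            assume "w = x" then have "E x u" using uw sym by simp
            then show False using Ex uU xdU U_def by auto
          qed
          moreover have "w \<noteq> y"
          proof
            assume "w = y" then have "E y u" using uw sym by simp
            then show False using Ey uU ydU True U_def by auto
          qed
          ultimately show "w \<in> C - {xc}" using clC u w uw unfolding closed_in_def U_def by blast
        qed
        then have "disconnected_on E (V - {xc})"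
          using sep[of E "C - {xc}" "V - {xc}" z x] zC zxc xV CU U_def xy Exy irr[of x] xc(2) by auto
        then have "k \<le> 1" using lower[of "{xc}"] xcV by simp
        then show ?thesis using 2 by simp
      next
        case False
        have nE: "\<not> E y xc" using Ey False xc(1) xcU ydU U_def by auto
        have "closed_in E (C - {xc}) (V - {xc, y})"
          unfolding closed_in_def
        proof (intro ballI impI)
          fix u w assume u: "u \<in> C - {xc}" and w: "w \<in> V - {xc, y}" and uw: "E u w"
          have uU: "u \<in> U" "u \<noteq> xc" "u \<in> C" using u CU by auto
          have "w \<noteq> x"
          proof
            assume "w = x" then have "E x u" using uw sym by simp
            then show False using Ex uU xdU U_def by auto
          qed
          then show "w \<in> C - {xc}" using clC u w uw unfolding closed_in_def U_def by blast
        qed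
        then have dc: "disconnected_on E (V - {xc, y})"
          using sep[of E "C - {xc}" "V - {xc, y}" z x] zC zxc xV CU U_def xy Exy irr[of x] xc(2) by auto
        have xcy: "xc \<noteq> y" using xc CU U_def by auto
        have "card {xc, y} = k" using xcy 2 by simp
        moreover have "independent_set E {xc, y}"
          unfolding independent_set_def using nE sym[of xc y] irr[of xc] irr[of y] by blast
        moreover have "{xc, y} \<subseteq> V" using xcV yV by simp
        ultimately have "min_vertex_cut V E {xc, y} \<and> independent_set E {xc, y}"
          using dc k_def unfolding min_vertex_cut_def vertex_cut_def by simp
        then show ?thesis by (rule exI)
      qed
    qed
  next
    case 3
    show ?thesis
    proof (cases "independent_set E {u. E v0 u}")
      case True
      have "{u. E v0 u} \<subseteq> V" using inV by blast
      then have "min_vertex_cut V E {u. E v0 u}" using cutN[OF v0] deg[OF v0] 3 k_def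
        unfolding min_vertex_cut_def vertex_cut_def by simp
      then show ?thesis using True by blast
    next
      case False
      then obtain a b where ab: "E v0 a" "E v0 b" "E a b" unfolding independent_set_def by blast
      have aV: "a \<in> V" and bV: "b \<in> V" using ab(1,2) inV by auto
      have "a \<noteq> b" using ab(3) irr[of a] by auto
      then obtain c where c: "{u. E v0 u} = {a,b,c}" "c \<noteq> a" "c \<noteq> b"
        using three_elems[OF deg[OF v0], of a b] ab(1,2) by auto
      have "v0 \<noteq> b" using ab(2) irr[of v0] by auto
      then obtain a' where a': "{u. E a u} = {v0,b,a'}" "a' \<noteq> v0" "a' \<noteq> b"
        using three_elems[OF deg[OF aV], of v0 b] ab(3) sym[OF ab(1)] by auto
      have "v0 \<noteq> a" using ab(1) irr[of v0] by auto
      then obtain b' where b': "{u. E b u} = {v0,a,b'}" "b' \<noteq> v0" "b' \<noteq> a"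
        using three_elems[OF deg[OF bV], of v0 a] sym[OF ab(2)] sym[OF ab(3)] by auto
      have Ev: "\<And>w. E v0 w \<longleftrightarrow> w = a \<or> w = b \<or> w = c"
      proof -
        fix w have "E v0 w \<longleftrightarrow> w \<in> {u. E v0 u}" by simp
        then show "E v0 w \<longleftrightarrow> w = a \<or> w = b \<or> w = c" unfolding c(1) by simp
      qed
      have Ea: "\<And>w. E a w \<longleftrightarrow> w = v0 \<or> w = b \<or> w = a'"
      proof -
        fix w have "E a w \<longleftrightarrow> w \<in> {u. E a u}" by simp
        then show "E a w \<longleftrightarrow> w = v0 \<or> w = b \<or> w = a'" unfolding a'(1) by simp
      qed
      have Eb: "\<And>w. E b w \<longleftrightarrow> w = v0 \<or> w = a \<or> w = b'"
      proof -
        fix w have "E b w \<longleftrightarrow> w \<in> {u. E b u}" by simp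
        then show "E b w \<longleftrightarrow> w = v0 \<or> w = a \<or> w = b'" unfolding b'(1) by simp
      qed
      have Evc: "E v0 c" and Eaa': "E a a'" and Ebb': "E b b'" using Ev Ea Eb by simp_all
      have cV: "c \<in> V" and a'V: "a' \<in> V" and b'V: "b' \<in> V" using inV Evc Eaa' Ebb' by auto
      have d1: "c \<noteq> v0" "a' \<noteq> a" "b' \<noteq> b" using Evc Eaa' Ebb' irr[of v0] irr[of a] irr[of b] by auto
      have six: "card {v0,a,b,c,a',b'} < card V" using card_list6[of v0 a b c a' b'] assms(4) by simp
      have fin6: "finite {v0,a,b,c,a',b'}" by simp
      have ne: "c \<noteq> a" "c \<noteq> b" "a' \<noteq> v0" "a' \<noteq> b" "b' \<noteq> v0" "b' \<noteq> a"
        using c(2,3) a'(2,3) b'(2,3) by auto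
      have cut0: "disconnected_on E (V - {c,a',b'})"
      proof (rule cut6[OF fin _ _ _ _ _ fin6 six, of "{c,a',b'}" "{v0,a,b}" v0])
        show "{c,a',b'} \<subseteq> V" using cV a'V b'V by simp
        show "{v0,a,b} \<subseteq> V - {c,a',b'}" using v0 aV bV d1 ne \<open>v0 \<noteq> a\<close> \<open>v0 \<noteq> b\<close> by auto
        show "closed_in E {v0,a,b} (V - {c,a',b'})" unfolding closed_in_def using Ev Ea Eb by auto
        show "v0 \<in> {v0,a,b}" by simp
        show "{c,a',b'} \<union> {v0,a,b} \<subseteq> {v0,a,b,c,a',b'}" by blast
      qed
      have "3 \<le> card {c,a',b'}" using lower[OF _ cut0] 3 cV a'V b'V by simp
      then have dist: "c \<noteq> a'" "c \<noteq> b'" "a' \<noteq> b'" by (auto simp: card_insert_if split: if_splits)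
      have cut1: "disconnected_on E (V - {v0,a',b'})"
      proof (rule cut6[OF fin _ _ _ _ _ fin6 six, of "{v0,a',b'}" "{a,b}" a])
        show "{v0,a',b'} \<subseteq> V" using v0 a'V b'V by simp
        show "{a,b} \<subseteq> V - {v0,a',b'}" using aV bV d1 ne \<open>v0 \<noteq> a\<close> \<open>v0 \<noteq> b\<close> by auto
        show "closed_in E {a,b} (V - {v0,a',b'})" unfolding closed_in_def using Ea Eb by auto
        show "a \<in> {a,b}" by simp
        show "{v0,a',b'} \<union> {a,b} \<subseteq> {v0,a,b,c,a',b'}" by blast
      qed
      have cut2: "disconnected_on E (V - {a,c,b'})"
      proof (rule cut6[OF fin _ _ _ _ _ fin6 six, of "{a,c,b'}" "{v0,b}" v0])
        show "{a,c,b'} \<subseteq> V" using aV cV b'V by simp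
        show "{v0,b} \<subseteq> V - {a,c,b'}" using v0 bV d1 ne \<open>v0 \<noteq> a\<close> \<open>a \<noteq> b\<close> by auto
        show "closed_in E {v0,b} (V - {a,c,b'})" unfolding closed_in_def using Ev Eb by auto
        show "v0 \<in> {v0,b}" by simp
        show "{a,c,b'} \<union> {v0,b} \<subseteq> {v0,a,b,c,a',b'}" by blast
      qed
      have cut3: "disconnected_on E (V - {b,c,a'})"
      proof (rule cut6[OF fin _ _ _ _ _ fin6 six, of "{b,c,a'}" "{v0,a}" v0])
        show "{b,c,a'} \<subseteq> V" using bV cV a'V by simp
        show "{v0,a} \<subseteq> V - {b,c,a'}" using v0 aV d1 ne \<open>v0 \<noteq> b\<close> \<open>a \<noteq> b\<close> by auto
        show "closed_in E {v0,a} (V - {b,c,a'})" unfolding closed_in_def using Ev Ea by auto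
        show "v0 \<in> {v0,a}" by simp
        show "{b,c,a'} \<union> {v0,a} \<subseteq> {v0,a,b,c,a',b'}" by blast
      qed
      have c1: "card {v0,a',b'} = 3" using ne dist d1 by auto
      have c2: "card {a,c,b'} = 3" using ne dist d1 by auto
      have c3: "card {b,c,a'} = 3" using ne dist d1 by auto
      have ind: "independent_set E {p,q,r}" if "\<not> E p q" "\<not> E p r" "\<not> E q r" for p q r
        using that sym[of q p] sym[of r p] sym[of r q] irr[of p] irr[of q] irr[of r]
        unfolding independent_set_def by blast
      have fin_cut: "\<exists>S. min_vertex_cut V E S \<and> independent_set E S"
        if "T \<subseteq> V" "disconnected_on E (V - T)" "card T = 3" "independent_set E T" for T
      proof -
        have "min_vertex_cut V E T" using that 3 k_def unfolding min_vertex_cut_def vertex_cut_def by simp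
        then show ?thesis using that(4) by blast
      qed
      show ?thesis
      proof (cases "E a' b'")
        case False
        have "independent_set E {v0,a',b'}" by (rule ind) (use False Ev ne dist d1 in auto)
        then show ?thesis using fin_cut[OF _ cut1 c1] v0 a'V b'V by simp
      next
        case Ea'b': True
        show ?thesis
        proof (cases "E c b'")
          case False
          have "independent_set E {a,c,b'}" by (rule ind) (use False Ea ne dist d1 in auto)
          then show ?thesis using fin_cut[OF _ cut2 c2] aV cV b'V by simp
        next
          case Ecb': True
          show ?thesis
          proof (cases "E c a'")
            case False
            have "independent_set E {b,c,a'}" by (rule ind) (use False Eb ne dist d1 in auto)
            then show ?thesis using fin_cut[OF _ cut3 c3] bV cV a'V by simp
          next
            case Eca': True
            have Nc: "{u. E c u} = {v0,a',b'}"
              by (rule three_eq[OF deg[OF cV]]) (use sym[OF Evc] Eca' Ecb' ne dist d1 in auto)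
            have Na': "{u. E a' u} = {a,c,b'}"
              by (rule three_eq[OF deg[OF a'V]]) (use sym[OF Eaa'] sym[OF Eca'] Ea'b' ne dist d1 in auto)
            have Nb': "{u. E b' u} = {b,c,a'}"
              by (rule three_eq[OF deg[OF b'V]]) (use sym[OF Ebb'] sym[OF Ecb'] sym[OF Ea'b'] ne dist d1 in auto)
            define W where "W = {v0,a,b,c,a',b'}"
            have clW: "closed_in E W V" unfolding closed_in_def
            proof (intro ballI impI)
              fix u w assume u: "u \<in> W" and w: "w \<in> V" and uw: "E u w"
              from u have "u = v0 \<or> u = a \<or> u = b \<or> u = c \<or> u = a' \<or> u = b'" unfolding W_def by simp
              then show "w \<in> W"
              proof (elim disjE)
                assume "u = v0" then show ?thesis using uw Ev W_def by auto
              next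
                assume "u = a" then show ?thesis using uw Ea W_def by auto
              next
                assume "u = b" then show ?thesis using uw Eb W_def by auto
              next
                assume "u = c" then have "w \<in> {u. E c u}" using uw by simp
                then show ?thesis unfolding Nc W_def by auto
              next
                assume "u = a'" then have "w \<in> {u. E a' u}" using uw by simp
                then show ?thesis unfolding Na' W_def by auto
              next
                assume "u = b'" then have "w \<in> {u. E b' u}" using uw by simp
                then show ?thesis unfolding Nb' W_def by auto
              qed
            qed
            have "V \<subseteq> W"
            proof
              fix y assume yV: "y \<in> V"
              show "y \<in> W"
              proof (rule ccontr)
                assume "y \<notin> W"
                moreover have "W \<subseteq> V" using v0 aV bV cV a'V b'V W_def by simp
                moreover have "v0 \<in> W" using W_def by simp
                ultimately have "disconnected_on E V" using sep[OF clW _ yV, of v0] by simp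
                then show False using notdisc by simp
              qed
            qed
            moreover have "finite W" using W_def by simp
            ultimately have "card V \<le> card W" by (simp add: card_mono)
            then have False using six unfolding W_def by linarith
            then show ?thesis by (rule FalseE)
          qed
        qed
      qed
    qed
  qed
qed

end
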